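(* Let $\bm w=(w_j)_{j\ge1}$ be a stationary Markov stick-breaking weights sequence with parameters $(\pi,\psi)$, and let $\bm v=(v_j)_{j\ge1}$ be its underlying Markov chain of length variables. Then: (i) If $\mathbb P\big[\bigcup_{j\ge1}\{v_j=1\}\big]=1$, then $\sum_{j\ge1}w_j=1$ a.s. (ii) If $\pi(\{0\})=0$, then $\sum_{j\ge1}w_j=1$ a.s. (iii) If $\pi$ is $\psi$-ergodic, then $\pi\neq\delta_0$ if and only if $\sum_{j\ge1}w_j=1$ a.s.
   Context: Length variables $\bm v=(v_j)_{j\ge1}$ are $[0,1]$-valued random variables and define stick-breaking weights $w_1=v_1$, $w_j=v_j\prod_{i=1}^{j-1}(1-v_i)$ for $j\ge2$. If $\bm v$ is a time-homogeneous Markov chain with initial distribution $\pi$ (the law of $v_1$) and one-step transition kernel $\psi(v,B)=\mathbb P[v_{j+1}\in B\mid v_j=v]$ on $([0,1],\mathcal B_{[0,1]})$, and $\pi$ is invariant for $\psi$ (i.e. $\pi(B)=\int\psi(v,B)\pi(dv)$ for all Borel $B$, so $\bm v$ is stationary), then $\bm w$ is called a stationary Markov stick-breaking weights sequence with parameters $(\pi,\psi)$. The set of $\psi$-invariant probability measures is convex; $\pi$ is called $\psi$-ergodic if it is an extreme point of this set. *)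

theory Defs
  imports "HOL-Probability.Probability"
begin

definition unit_space :: "real measure" where
  "unit_space = restrict_space borel {0..1}"

definition transition_kernel :: "(real \<Rightarrow> real measure) \<Rightarrow> bool" where
  "transition_kernel \<psi> \<longleftrightarrow> \<psi> \<in> unit_space \<rightarrow>\<^sub>M prob_algebra unit_space"

text \<open>Iterated integral giving the finite-dimensional distributions of a
  time-homogeneous Markov chain with kernel psi:
  mc_fdd psi A i m x = 1_{A i}(x) * int psi(x,dy) mc_fdd psi A (i+1) (m-1) y.\<close>
fun mc_fdd :: "(real \<Rightarrow> real measure) \<Rightarrow> (nat \<Rightarrow> real set) \<Rightarrow> nat \<Rightarrow> nat \<Rightarrow> real \<Rightarrow> ennreal" where
  "mc_fdd \<psi> A i 0 x = indicator (A i) x"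
| "mc_fdd \<psi> A i (Suc m) x = indicator (A i) x * (\<integral>\<^sup>+ y. mc_fdd \<psi> A (Suc i) m y \<partial>(\<psi> x))"

text \<open>v (indexed from 0, v 0 = v_1) is a time-homogeneous Markov chain on [0,1] on the
  probability space M with initial distribution pi and transition kernel psi:
  P[v_0 in A_0, ..., v_n in A_n] = int pi(dx0) 1_{A_0}(x0) int psi(x0,dx1) 1_{A_1}(x1) ...\<close>
definition markov_chain :: "'a measure \<Rightarrow> (nat \<Rightarrow> 'a \<Rightarrow> real) \<Rightarrow> real measure \<Rightarrow> (real \<Rightarrow> real measure) \<Rightarrow> bool" where
  "markov_chain M v \<pi> \<psi> \<longleftrightarrow>
     (\<forall>j. v j \<in> M \<rightarrow>\<^sub>M unit_space) \<and>
     (\<forall>n A. (\<forall>i\<le>n. A i \<in> sets unit_space) \<longrightarrow>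
        emeasure M {x \<in> space M. \<forall>i\<le>n. v i x \<in> A i} = (\<integral>\<^sup>+ x. mc_fdd \<psi> A 0 n x \<partial>\<pi>))"

definition invariant_measure :: "(real \<Rightarrow> real measure) \<Rightarrow> real measure \<Rightarrow> bool" where
  "invariant_measure \<psi> \<mu> \<longleftrightarrow> prob_space \<mu> \<and> sets \<mu> = sets unit_space \<and>
     (\<forall>B \<in> sets unit_space. emeasure \<mu> B = (\<integral>\<^sup>+ v. emeasure (\<psi> v) B \<partial>\<mu>))"

text \<open>pi is psi-ergodic: an extreme point of the convex set of psi-invariant probability measures.\<close>
definition ergodic_measure :: "(real \<Rightarrow> real measure) \<Rightarrow> real measure \<Rightarrow> bool" where
  "ergodic_measure \<psi> \<pi> \<longleftrightarrow> invariant_measure \<psi> \<pi> \<and>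
     (\<forall>\<mu>1 \<mu>2 (t::real). invariant_measure \<psi> \<mu>1 \<longrightarrow> invariant_measure \<psi> \<mu>2 \<longrightarrow> 0 < t \<longrightarrow> t < 1 \<longrightarrow>
        (\<forall>B \<in> sets unit_space. emeasure \<pi> B = ennreal t * emeasure \<mu>1 B + ennreal (1 - t) * emeasure \<mu>2 B)
        \<longrightarrow> \<mu>1 = \<pi> \<and> \<mu>2 = \<pi>)"

text \<open>Stick-breaking weights (0-indexed): w j = v j * prod_{i<j} (1 - v i).\<close>
definition sb_weight :: "(nat \<Rightarrow> 'a \<Rightarrow> real) \<Rightarrow> nat \<Rightarrow> 'a \<Rightarrow> real" where
  "sb_weight v j x = v j x * (\<Prod>i<j. 1 - v i x)"

end

theory Submission
  imports Defs
begin

lemma sb_partial: fixes n :: nat and u :: "nat \<Rightarrow> real"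
  shows "(\<Sum>j<n. u j * (\<Prod>i<j. 1 - u i)) = 1 - (\<Prod>i<n. 1 - u i)"
  by (induction n) (simp_all add: algebra_simps)

lemma det_sums:
  fixes u :: "nat \<Rightarrow> real"
  assumes r: "\<And>i. 0 \<le> u i \<and> u i \<le> 1" and e: "0 < \<epsilon>"
    and io: "\<And>m. \<exists>n\<ge>m. u n > \<epsilon>"
  shows "(\<lambda>j. u j * (\<Prod>i<j. 1 - u i)) sums 1"
proof -
  define p where "p n = (\<Prod>i<n. 1 - u i)" for n
  have p0: "p n \<ge> 0" for n unfolding p_def using r by (intro prod_nonneg) (simp add: r)
  have pS: "p (Suc n) = p n * (1 - u n)" for n unfolding p_def by simp
  have pdec: "p n \<le> p m" if "m \<le> n" for m n
    using that
  proof (induction n)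
    case 0 then show ?case by simp
  next
    case (Suc n)
    show ?case
    proof (cases "m = Suc n")
      case True then show ?thesis by simp
    next
      case False
      then have "p n \<le> p m" using Suc by simp
      moreover have "p (Suc n) \<le> p n" unfolding pS using p0[of n] r[of n]
        by (simp add: mult_left_le)
      ultimately show ?thesis by simp
    qed
  qed
  obtain n0 where n0: "u n0 > \<epsilon>" using io by blast
  then have e1: "\<epsilon> < 1" using r[of n0] by simp
  have pow: "\<exists>N. p N \<le> (1 - \<epsilon>) ^ K" for K
  proof (induction K)
    case 0 show ?case by (rule exI[of _ 0]) (simp add: p_def)
  next
    case (Suc K)
    then obtain N where N: "p N \<le> (1 - \<epsilon>) ^ K" by blast
    obtain n where n: "n \<ge> N" "u n > \<epsilon>" using io by blast
    have "p (Suc n) = p n * (1 - u n)" by (rule pS)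
    also have "\<dots> \<le> p N * (1 - \<epsilon>)"
      using pdec[OF n(1)] p0[of n] n(2) r[of n] by (intro mult_mono) auto
    also have "\<dots> \<le> (1 - \<epsilon>) ^ K * (1 - \<epsilon>)"
      using N e1 by (intro mult_right_mono) auto
    finally show ?case by (intro exI[of _ "Suc n"]) (simp add: mult.commute)
  qed
  have lim: "p \<longlonglongrightarrow> 0"
  proof (rule metric_LIMSEQ_I)
    fix r' :: real assume r': "0 < r'"
    have "(\<lambda>K. (1 - \<epsilon>) ^ K) \<longlonglongrightarrow> 0"
      by (rule LIMSEQ_power_zero) (use e e1 in auto)
    from order_tendstoD(2)[OF this r'] obtain K where K: "(1 - \<epsilon>) ^ K < r'"
      by (auto simp: eventually_sequentially)
    obtain N where N: "p N \<le> (1 - \<epsilon>) ^ K" using pow by blast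
    show "\<exists>no. \<forall>n\<ge>no. dist (p n) 0 < r'"
    proof (intro exI allI impI)
      fix n assume "N \<le> n"
      then have "p n \<le> p N" by (rule pdec)
      then show "dist (p n) 0 < r'" using p0[of n] N K by simp
    qed
  qed
  have "(\<lambda>n. 1 - p n) \<longlonglongrightarrow> 1 - 0" by (intro tendsto_diff tendsto_const lim)
  then show ?thesis unfolding sums_def sb_partial p_def by simp
qed

lemma dirac_like:
  assumes N: "prob_space N" and a: "{a} \<in> sets N" and a1: "emeasure N {a} = 1" and B: "B \<in> sets N"
  shows "emeasure N B = indicator B a"
proof (cases "a \<in> B")
  case True
  have "emeasure N {a} \<le> emeasure N B" by (rule emeasure_mono) (use True B in blast)+
  then have "1 \<le> emeasure N B" using a1 by (simp only:)
  moreover have "emeasure N B \<le> 1" using prob_space.emeasure_le_1[OF N] .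
  ultimately have "emeasure N B = 1" by (rule antisym[rotated])
  then show ?thesis using True by (simp add: indicator_def)
next
  case False
  have "emeasure N B + emeasure N {a} = emeasure N (B \<union> {a})"
    by (rule plus_emeasure[OF B a]) (use False in blast)
  also have "\<dots> \<le> 1" using prob_space.emeasure_le_1[OF N] .
  finally have "1 + emeasure N B \<le> 1 + 0" using a1 by (metis add.commute add.right_neutral)
  then have "emeasure N B \<le> 0" unfolding ennreal_add_left_cancel_le by simp
  then have "emeasure N B = 0" by (simp only: le_zero_eq)
  then show ?thesis using False by (simp add: indicator_def)
qed

locale smc =
  fixes M :: "'a measure" and v :: "nat \<Rightarrow> 'a \<Rightarrow> real"
    and \<pi> :: "real measure" and \<psi> :: "real \<Rightarrow> real measure"
  assumes M: "prob_space M"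
    and K: "transition_kernel \<psi>"
    and I: "invariant_measure \<psi> \<pi>"
    and MC: "markov_chain M v \<pi> \<psi>"
begin

lemma space_S: "space unit_space = {0..1}"
  by (simp add: unit_space_def space_restrict_space)

lemma sets_S_iff: "A \<in> sets unit_space \<longleftrightarrow> A \<in> sets borel \<and> A \<subseteq> {0..1}"
  unfolding unit_space_def by (auto simp add: sets_restrict_space_iff)

lemma v_meas: "v j \<in> M \<rightarrow>\<^sub>M unit_space"
  using MC unfolding markov_chain_def by blast

lemma v_range: "x \<in> space M \<Longrightarrow> 0 \<le> v j x \<and> v j x \<le> 1"
  using measurable_space[OF v_meas, of x j] space_S by auto

lemma sets_pi: "sets \<pi> = sets unit_space"
  using I unfolding invariant_measure_def by auto

lemma space_pi: "space \<pi> = {0..1}"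
  using sets_eq_imp_space_eq[OF sets_pi] space_S by simp

lemma prob_pi: "prob_space \<pi>"
  using I unfolding invariant_measure_def by auto

lemma psi_sub: "\<psi> \<in> unit_space \<rightarrow>\<^sub>M subprob_algebra unit_space"
  using K unfolding transition_kernel_def by (rule measurable_prob_algebraD)

lemma psi_sub_pi: "\<psi> \<in> \<pi> \<rightarrow>\<^sub>M subprob_algebra unit_space"
  using psi_sub measurable_cong_sets[OF sets_pi refl] by blast

lemma psi_prob: "x \<in> {0..1} \<Longrightarrow> prob_space (\<psi> x)"
  using measurable_space[OF K[unfolded transition_kernel_def], of x] space_S
  by (auto simp: space_prob_algebra)

lemma sets_psi: "x \<in> {0..1} \<Longrightarrow> sets (\<psi> x) = sets unit_space"
  using measurable_space[OF K[unfolded transition_kernel_def], of x] space_S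
  by (auto simp: space_prob_algebra)

lemma bind_pi: "\<pi> \<bind> \<psi> = \<pi>"
proof (rule measure_eqI)
  have ne: "space \<pi> \<noteq> {}" using space_pi by auto
  show s: "sets (\<pi> \<bind> \<psi>) = sets \<pi>"
    by (subst sets_bind[where N=unit_space]) (auto simp: space_pi sets_psi sets_pi ne)
  fix B assume "B \<in> sets (\<pi> \<bind> \<psi>)"
  then have B: "B \<in> sets unit_space" using s sets_pi by simp
  show "emeasure (\<pi> \<bind> \<psi>) B = emeasure \<pi> B"
    using emeasure_bind[OF ne psi_sub_pi B] I B unfolding invariant_measure_def by simp
qed

lemma INV: "g \<in> borel_measurable unit_space \<Longrightarrow> (\<integral>\<^sup>+x. (\<integral>\<^sup>+y. g y \<partial>\<psi> x) \<partial>\<pi>) = (\<integral>\<^sup>+x. g x \<partial>\<pi>)"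
  using nn_integral_bind[OF _ psi_sub_pi, of g] bind_pi by simp

lemma mc_meas: "(\<And>j. A j \<in> sets unit_space) \<Longrightarrow> mc_fdd \<psi> A i m \<in> borel_measurable unit_space"
proof (induction m arbitrary: i)
  case 0 then show ?case by simp
next
  case (Suc m)
  have "(\<lambda>x. \<integral>\<^sup>+ y. mc_fdd \<psi> A (Suc i) m y \<partial>\<psi> x) \<in> borel_measurable unit_space"
    using measurable_compose[OF psi_sub nn_integral_measurable_subprob_algebra[OF Suc.IH[OF Suc.prems]]] by simp
  then show ?case using Suc.prems by simp
qed

lemma mc_shift: "mc_fdd \<psi> A (i+k) m x = mc_fdd \<psi> (\<lambda>j. A (j+k)) i m x"
proof (induction m arbitrary: i x)
  case (Suc m)
  have "mc_fdd \<psi> A (Suc i + k) m = mc_fdd \<psi> (\<lambda>j. A (j + k)) (Suc i) m"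
    using Suc.IH[of "Suc i"] by (intro ext) simp
  then show ?case by simp
qed simp

lemma SH: "(\<And>j. A j \<in> sets unit_space) \<Longrightarrow> (\<forall>j<k. A j = {0..1}) \<Longrightarrow>
   (\<integral>\<^sup>+x. mc_fdd \<psi> A 0 (k+n) x \<partial>\<pi>) = (\<integral>\<^sup>+x. mc_fdd \<psi> (\<lambda>j. A (j+k)) 0 n x \<partial>\<pi>)"
proof (induction k arbitrary: A)
  case 0 then show ?case by simp
next
  case (Suc k)
  have A0: "A 0 = {0..1}" using Suc.prems by auto
  have "(\<integral>\<^sup>+x. mc_fdd \<psi> A 0 (Suc k+n) x \<partial>\<pi>) = (\<integral>\<^sup>+x. (\<integral>\<^sup>+ y. mc_fdd \<psi> A 1 (k+n) y \<partial>\<psi> x) \<partial>\<pi>)"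
    by (rule nn_integral_cong) (simp add: A0 space_pi)
  also have "\<dots> = (\<integral>\<^sup>+x. mc_fdd \<psi> A 1 (k+n) x \<partial>\<pi>)"
    by (rule INV[OF mc_meas]) (rule Suc.prems)
  also have "\<dots> = (\<integral>\<^sup>+x. mc_fdd \<psi> (\<lambda>j. A (j+1)) 0 (k+n) x \<partial>\<pi>)"
    using mc_shift[of A 0 1] by simp
  also have "\<dots> = (\<integral>\<^sup>+x. mc_fdd \<psi> (\<lambda>j. A (j+1+k)) 0 n x \<partial>\<pi>)"
    using Suc.IH[of "\<lambda>j. A (j+1)"] Suc.prems by auto
  finally show ?case by (simp add: add.commute add.left_commute)
qed


lemma MCe: assumes A: "\<And>j. A j \<in> sets unit_space" shows
  "emeasure M {x \<in> space M. \<forall>i\<le>n. v i x \<in> A i} = (\<integral>\<^sup>+x. mc_fdd \<psi> A 0 n x \<partial>\<pi>)"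
proof -
  have h: "\<forall>n A. (\<forall>i\<le>n. A i \<in> sets unit_space) \<longrightarrow>
        emeasure M {x \<in> space M. \<forall>i\<le>n. v i x \<in> A i} = (\<integral>\<^sup>+ x. mc_fdd \<psi> A 0 n x \<partial>\<pi>)"
    using MC unfolding markov_chain_def by (rule conjunct2)
  show ?thesis by (rule h[rule_format]) (rule A)
qed

lemma vm: "A \<in> sets unit_space \<Longrightarrow> {x \<in> space M. v j x \<in> A} \<in> sets M"
proof -
  assume A: "A \<in> sets unit_space"
  have eq: "{x \<in> space M. v j x \<in> A} = v j -` A \<inter> space M" by blast
  show ?thesis unfolding eq by (rule measurable_sets[OF v_meas A])
qed

lemma vnm: "A \<in> sets unit_space \<Longrightarrow> {x \<in> space M. v j x \<notin> A} \<in> sets M"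
proof -
  assume A: "A \<in> sets unit_space"
  have eq: "{x \<in> space M. v j x \<notin> A} = space M - {x \<in> space M. v j x \<in> A}" by blast
  show ?thesis unfolding eq by (rule sets.Diff[OF sets.top vm[OF A]])
qed

lemma ev_meas: "(\<And>j. A j \<in> sets unit_space) \<Longrightarrow>
  {x \<in> space M. \<forall>i\<le>n. v (k+i) x \<in> A i} \<in> sets M"
proof -
  assume A: "\<And>j. A j \<in> sets unit_space"
  have h: "{x \<in> space M. \<forall>i\<in>{..n}. v (k+i) x \<in> A i} \<in> sets M"
    by (intro sets.sets_Collect_finite_All vm A finite_atMost)
  have eq: "{x \<in> space M. \<forall>i\<le>n. v (k+i) x \<in> A i} = {x \<in> space M. \<forall>i\<in>{..n}. v (k+i) x \<in> A i}"
    by blast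
  show ?thesis unfolding eq by (rule h)
qed

lemma S1: assumes A: "\<And>j. A j \<in> sets unit_space"
  shows "emeasure M {x \<in> space M. \<forall>i\<le>n. v (k+i) x \<in> A i} = emeasure M {x \<in> space M. \<forall>i\<le>n. v i x \<in> A i}"
proof -
  define A' where "A' j = (if j < k then {0..1} else A (j-k))" for j
  have A': "A' j \<in> sets unit_space" for j using A space_S unfolding A'_def
    by (metis sets.top)
  have eq: "{x \<in> space M. \<forall>i\<le>n. v (k+i) x \<in> A i} = {x \<in> space M. \<forall>i\<le>k+n. v i x \<in> A' i}"
  proof (intro Collect_cong conj_cong refl iffI allI impI)
    fix x i assume x: "x \<in> space M" and h: "\<forall>i\<le>n. v (k+i) x \<in> A i" and i: "i \<le> k+n"
    show "v i x \<in> A' i"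
    proof (cases "i < k")
      case True then show ?thesis using v_range[OF x] by (auto simp: A'_def)
    next
      case False then have ik: "k + (i-k) = i" "i - k \<le> n" using i by auto
      have "v (k + (i-k)) x \<in> A (i-k)" using h ik(2) by blast
      then show ?thesis using False ik(1) by (simp add: A'_def)
    qed
  next
    fix x i assume x: "x \<in> space M" and h: "\<forall>i\<le>k+n. v i x \<in> A' i" and i: "i \<le> n"
    then show "v (k+i) x \<in> A i" using h[rule_format, of "k+i"] by (auto simp: A'_def)
  qed
  have "emeasure M {x \<in> space M. \<forall>i\<le>k+n. v i x \<in> A' i} = (\<integral>\<^sup>+x. mc_fdd \<psi> A' 0 (k+n) x \<partial>\<pi>)"
    by (rule MCe[OF A'])
  also have "\<dots> = (\<integral>\<^sup>+x. mc_fdd \<psi> (\<lambda>j. A' (j+k)) 0 n x \<partial>\<pi>)"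
    by (rule SH[OF A']) (auto simp: A'_def)
  also have "(\<lambda>j. A' (j+k)) = A" by (auto simp: A'_def)
  also have "(\<integral>\<^sup>+x. mc_fdd \<psi> A 0 n x \<partial>\<pi>) = emeasure M {x \<in> space M. \<forall>i\<le>n. v i x \<in> A i}"
    by (rule MCe[OF A, symmetric])
  finally show ?thesis by (subst eq)
qed

end

sublocale smc \<subseteq> P: prob_space M by (rule M)

context smc begin

lemma S1m: assumes "\<And>j. A j \<in> sets unit_space" shows
  "measure M {x \<in> space M. \<forall>i\<le>n. v (k+i) x \<in> A i} = measure M {x \<in> space M. \<forall>i\<le>n. v i x \<in> A i}"
  unfolding measure_def using S1[OF assms, of n k] by (rule arg_cong)

lemma recur0:
  assumes A: "A \<in> sets unit_space"
  shows "emeasure M {x \<in> space M. v k x \<in> A \<and> (\<forall>n>k. v n x \<notin> A)} = 0"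
proof -
  define B where "B = {x \<in> space M. v k x \<in> A \<and> (\<forall>n>k. v n x \<notin> A)}"
  define Ap where "Ap i = (if i = 0 then A else {0..1} - A)" for i :: nat
  have Ap: "Ap i \<in> sets unit_space" for i
  proof (cases "i = 0")
    case True then show ?thesis using A by (simp add: Ap_def)
  next
    case False
    have "{0..1} - A \<in> sets unit_space" using sets.Diff[OF sets.top A] space_S by metis
    then show ?thesis using False by (simp add: Ap_def)
  qed
  define E where "E k' h = {x \<in> space M. \<forall>i\<le>h. v (k'+i) x \<in> Ap i}" for k' h
  have Em: "E k' h \<in> sets M" for k' h unfolding E_def by (rule ev_meas[OF Ap])
  have Bm: "B \<in> sets M"
  proof -
    have h1: "{x \<in> space M. \<forall>n\<in>{k<..}. v n x \<notin> A} \<in> sets M"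
      by (rule sets.sets_Collect_countable_All') (rule vnm[OF A], simp)
    have eq: "B = {x \<in> space M. \<forall>n\<in>{k<..}. v n x \<notin> A} \<inter> {x \<in> space M. v k x \<in> A}"
      unfolding B_def by auto
    show ?thesis unfolding eq by (rule sets.Int[OF h1 vm[OF A]])
  qed
  have BE: "B \<subseteq> E k h" for h
    unfolding B_def E_def Ap_def using v_range by auto
  have Eeq: "measure M (E k' h) = measure M (E k h)" for k' h
    unfolding E_def using S1m[OF Ap, of h k'] S1m[OF Ap, of h k] by simp
  have pE: "measure M B \<le> measure M (E k' h)" for k' h
    using P.finite_measure_mono[OF BE[of h] Em[of k h]] Eeq[of k' h] by simp
  have "real K * measure M B \<le> 1" for K
  proof -
    define H where "H = K + k"
    have disj: "disjoint_family_on (\<lambda>k'. E k' (H - k')) {..<K}"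
      unfolding disjoint_family_on_def
    proof (intro ballI impI)
      fix a b assume a: "a \<in> {..<K}" and b: "b \<in> {..<K}" and ab: "a \<noteq> b"
      show "E a (H - a) \<inter> E b (H - b) = {}"
      proof (rule ccontr)
        assume "E a (H - a) \<inter> E b (H - b) \<noteq> {}"
        then obtain x where xa: "x \<in> E a (H - a)" and xb: "x \<in> E b (H - b)" by blast
        { fix c d assume c: "c < K" "d < K" "c < d" and xc: "x \<in> E c (H - c)" and xd: "x \<in> E d (H - d)"
          have "d - c \<le> H - c" "d - c \<noteq> 0" using c unfolding H_def by auto
          then have "v (c + (d - c)) x \<in> {0..1} - A" using xc unfolding E_def Ap_def by auto
          moreover have "c + (d - c) = d" using c by simp
          ultimately have "v d x \<notin> A" by simp
          moreover have "v (d + 0) x \<in> A" using xd unfolding E_def Ap_def by auto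
          ultimately have False by simp }
        then show False using a b ab xa xb by (metis lessThan_iff nat_neq_iff)
      qed
    qed
    have "real K * measure M B = (\<Sum>k'<K. measure M B)" by simp
    also have "\<dots> \<le> (\<Sum>k'<K. measure M (E k' (H - k')))" by (intro sum_mono pE)
    also have "\<dots> = measure M (\<Union>k'\<in>{..<K}. E k' (H - k'))"
      by (rule P.finite_measure_finite_Union[symmetric]) (use Em disj in auto)
    also have "\<dots> \<le> 1" by (rule P.prob_le_1)
    finally show ?thesis .
  qed
  then have "measure M B = 0"
  proof -
    assume h: "\<And>K. real K * measure M B \<le> 1"
    show ?thesis
    proof (rule ccontr)
      assume "measure M B \<noteq> 0"
      then have pos: "measure M B > 0" using measure_nonneg[of M B] by linarith
      obtain K :: nat where "2 / measure M B < real K" using reals_Archimedean2 by blast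
      then have "2 < real K * measure M B" using pos by (simp add: field_simps)
      then show False using h[of K] by simp
    qed
  qed
  then show ?thesis unfolding B_def[symmetric] using P.emeasure_eq_measure[of B] by simp
qed

lemma Bk_null:
  assumes A: "A \<in> sets unit_space"
  shows "{x \<in> space M. v k x \<in> A \<and> (\<forall>n>k. v n x \<notin> A)} \<in> null_sets M"
proof -
  define B where "B = {x \<in> space M. v k x \<in> A \<and> (\<forall>n>k. v n x \<notin> A)}"
  have h1: "{x \<in> space M. \<forall>n\<in>{k<..}. v n x \<notin> A} \<in> sets M"
    by (rule sets.sets_Collect_countable_All') (rule vnm[OF A], simp)
  have eq: "B = {x \<in> space M. \<forall>n\<in>{k<..}. v n x \<notin> A} \<inter> {x \<in> space M. v k x \<in> A}"
    unfolding B_def by auto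
  have "B \<in> sets M" unfolding eq by (rule sets.Int[OF h1 vm[OF A]])
  then show ?thesis using recur0[OF A, of k] unfolding B_def by (intro null_setsI)
qed

lemma recurAE:
  assumes A: "A \<in> sets unit_space"
  shows "AE x in M. \<forall>k. v k x \<in> A \<longrightarrow> (\<exists>n>k. v n x \<in> A)"
  unfolding AE_all_countable
proof
  fix k
  show "AE x in M. v k x \<in> A \<longrightarrow> (\<exists>n>k. v n x \<in> A)"
    by (rule AE_I'[OF Bk_null[OF A, of k]]) auto
qed

lemma io_of:
  assumes h: "\<forall>k. v k x \<in> A \<longrightarrow> (\<exists>n>k. v n x \<in> A)" and k: "v k x \<in> A"
  shows "\<exists>n\<ge>m. v n x \<in> A"
proof (induction m)
  case 0 then show ?case using k by blast
next
  case (Suc m)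
  then obtain n where "n \<ge> m" "v n x \<in> A" by blast
  then obtain n' where "n' > n" "v n' x \<in> A" using h by blast
  then show ?case using \<open>n \<ge> m\<close> by (intro exI[of _ n']) auto
qed

lemma G: "AE x in M. (\<exists>k. v k x > 0) \<longrightarrow> (\<lambda>j. sb_weight v j x) sums 1"
proof -
  define Am where "Am m = {1 / real (Suc m) <.. 1}" for m
  have Am: "Am m \<in> sets unit_space" for m
  proof -
    have "0 < 1 / real (Suc m)" by simp
    then have "Am m \<subseteq> {0..1}" unfolding Am_def subset_eq
      by (metis atLeastAtMost_iff greaterThanAtMost_iff less_eq_real_def order.strict_trans)
    then show ?thesis unfolding sets_S_iff Am_def by auto
  qed
  have "AE x in M. \<forall>m. \<forall>k. v k x \<in> Am m \<longrightarrow> (\<exists>n>k. v n x \<in> Am m)"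
    using recurAE[OF Am] by (subst AE_all_countable) blast
  then show ?thesis using AE_space
  proof eventually_elim
    case (elim x)
    then have h: "\<forall>m k. v k x \<in> Am m \<longrightarrow> (\<exists>n>k. v n x \<in> Am m)" and x: "x \<in> space M" by auto
    show ?case
    proof
    assume ex: "\<exists>k. v k x > 0"
    then obtain k where k: "v k x > 0" by blast
    obtain m where m: "1 / real (Suc m) < v k x"
      using reals_Archimedean[OF k] by (auto simp: divide_inverse)
    have kA: "v k x \<in> Am m" unfolding Am_def using m v_range[OF x, of k] by auto
    have io: "\<exists>n\<ge>m'. v n x > 1 / real (Suc m)" for m'
      using io_of[of x "Am m" k m'] h kA unfolding Am_def by auto
    show "(\<lambda>j. sb_weight v j x) sums 1"
      unfolding sb_weight_def
      by (rule det_sums[OF v_range[OF x] _ io]) simp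
  qed
  qed
qed

lemma P0:
  assumes A: "A \<in> sets unit_space"
  shows "emeasure M {x \<in> space M. v j x \<in> A} = emeasure \<pi> A"
proof -
  have A': "(\<lambda>_::nat. A) i \<in> sets unit_space" for i using A .
  have "emeasure M {x \<in> space M. v j x \<in> A} = emeasure M {x \<in> space M. \<forall>i\<le>0. v (j+i) x \<in> (\<lambda>_. A) i}"
    by (rule arg_cong[where f="emeasure M"]) auto
  also have "\<dots> = emeasure M {x \<in> space M. \<forall>i\<le>0. v i x \<in> (\<lambda>_. A) i}"
    by (rule S1[OF A'])
  also have "\<dots> = (\<integral>\<^sup>+x. mc_fdd \<psi> (\<lambda>_. A) 0 0 x \<partial>\<pi>)"
    by (rule MCe[OF A'])
  also have "\<dots> = (\<integral>\<^sup>+x. indicator A x \<partial>\<pi>)" by simp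
  also have "\<dots> = emeasure \<pi> A"
    by (rule nn_integral_indicator) (subst sets_pi, rule A)
  finally show ?thesis .
qed

lemma zero_S: "{0} \<in> sets unit_space" unfolding sets_S_iff
  by (intro conjI borel_closed closed_singleton) auto
lemma one_S: "{1} \<in> sets unit_space" unfolding sets_S_iff
  by (intro conjI borel_closed closed_singleton) auto

lemma part1:
  assumes h: "emeasure M {x \<in> space M. \<exists>j. v j x = 1} = 1"
  shows "AE x in M. (\<lambda>j. sb_weight v j x) sums 1"
proof -
  have meas: "{x \<in> space M. \<exists>j. v j x \<in> {1}} \<in> sets M"
    by (rule sets.sets_Collect_countable_Ex) (rule vm[OF one_S])
  have eq: "{x \<in> space M. \<exists>j. v j x = 1} = {x \<in> space M. \<exists>j. v j x \<in> {1}}" by auto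
  have "AE x in M. x \<in> {x \<in> space M. \<exists>j. v j x \<in> {1}}"
    using P.AE_in_set_eq_1[OF meas] h unfolding eq P.emeasure_eq_measure by simp
  then show ?thesis using G
  proof eventually_elim
    case (elim x)
    then obtain j where "v j x = 1" by blast
    then have "\<exists>k. v k x > 0" by (intro exI[of _ j]) simp
    then show ?case using elim by blast
  qed
qed

lemma part2:
  assumes h: "emeasure \<pi> {0} = 0"
  shows "AE x in M. (\<lambda>j. sb_weight v j x) sums 1"
proof -
  have "{x \<in> space M. v 0 x \<in> {0}} \<in> null_sets M"
    using P0[OF zero_S, of 0] h vm[OF zero_S, of 0] by (intro null_setsI) auto
  then have "AE x in M. v 0 x \<notin> {0}"
    by (rule AE_I') auto
  then show ?thesis using G AE_space
  proof eventually_elim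
    case (elim x)
    then have "v 0 x > 0" using v_range[of x 0] by auto
    then show ?case using elim by auto
  qed
qed

lemma part3a:
  assumes h: "\<pi> = return unit_space 0"
  shows "\<not> (AE x in M. (\<lambda>j. sb_weight v j x) sums 1)"
proof
  assume ae: "AE x in M. (\<lambda>j. sb_weight v j x) sums 1"
  have "\<forall>j. AE x in M. v j x \<in> {0}"
  proof
    fix j
    have "emeasure M {x \<in> space M. v j x \<in> {0}} = 1"
      using P0[OF zero_S, of j] h zero_S space_S by simp
    then show "AE x in M. v j x \<in> {0}"
      using P.AE_in_set_eq_1[OF vm[OF zero_S, of j]] unfolding P.emeasure_eq_measure by simp
  qed
  then have "AE x in M. \<forall>j. v j x \<in> {0}" by (subst AE_all_countable)
  then have "AE x in M. False" using ae
  proof eventually_elim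
    case (elim x)
    then have "(\<lambda>j. sb_weight v j x) = (\<lambda>_. 0)" by (auto simp: sb_weight_def)
    then have "(\<lambda>j. sb_weight v j x) sums 0" by simp
    then show False using elim sums_unique2 by fastforce
  qed
  then show False by simp
qed

lemma setpi: "X \<in> sets unit_space \<Longrightarrow> X \<in> sets \<pi>"
  by (subst sets_pi)

lemma s0: "sets (\<psi> 0) = sets unit_space" by (rule sets_psi) simp

lemma ind_meas: "X \<in> sets unit_space \<Longrightarrow> indicator X \<in> borel_measurable \<pi>"
  by (rule borel_measurable_indicator) (rule setpi)

lemma psiB_meas: "B \<in> sets unit_space \<Longrightarrow> (\<lambda>y. emeasure (\<psi> y) B) \<in> borel_measurable \<pi>"
  by (rule measurable_compose[OF psi_sub_pi measurable_emeasure_subprob_algebra])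

lemma D_S: "{0<..1::real} \<in> sets unit_space" unfolding sets_S_iff by auto

lemma mc_zero: "mc_fdd \<psi> (\<lambda>_. {0}) i n x = indicator {0} x * (emeasure (\<psi> 0) {0}) ^ n"
proof (induction n arbitrary: i x)
  case 0 then show ?case by simp
next
  case (Suc n)
  show ?case
  proof (cases "x = 0")
    case True
    have "(\<integral>\<^sup>+ y. mc_fdd \<psi> (\<lambda>_. {0}) (Suc i) n y \<partial>\<psi> 0)
        = (\<integral>\<^sup>+ y. (emeasure (\<psi> 0) {0}) ^ n * indicator {0} y \<partial>\<psi> 0)"
      by (rule nn_integral_cong) (simp add: Suc.IH mult.commute)
    also have "\<dots> = (emeasure (\<psi> 0) {0}) ^ n * emeasure (\<psi> 0) {0}"
      by (rule nn_integral_cmult_indicator) (unfold s0, rule zero_S)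
    finally show ?thesis using True by (simp add: mult.commute)
  next
    case False then show ?thesis by simp
  qed
qed

lemma piB_split:
  assumes B: "B \<in> sets unit_space"
  shows "emeasure \<pi> B = emeasure \<pi> (B \<inter> {0<..1}) + indicator B 0 * emeasure \<pi> {0}"
proof -
  have sub: "B \<subseteq> {0..1}" using B unfolding sets_S_iff by blast
  have eq: "B = (B \<inter> {0<..1}) \<union> (B \<inter> {0})" using sub by auto
  have m1: "B \<inter> {0<..1} \<in> sets \<pi>" by (rule setpi, rule sets.Int[OF B D_S])
  have m2: "B \<inter> {0} \<in> sets \<pi>" by (rule setpi, rule sets.Int[OF B zero_S])
  have "emeasure \<pi> B = emeasure \<pi> ((B \<inter> {0<..1}) \<union> (B \<inter> {0}))" using eq by (rule arg_cong)
  also have "\<dots> = emeasure \<pi> (B \<inter> {0<..1}) + emeasure \<pi> (B \<inter> {0})"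
    by (rule plus_emeasure[OF m1 m2, symmetric]) auto
  also have "emeasure \<pi> (B \<inter> {0}) = indicator B 0 * emeasure \<pi> {0}"
    by (cases "0 \<in> B") (auto simp: indicator_def)
  finally show ?thesis .
qed

lemma psi0_dirac:
  assumes q: "emeasure (\<psi> 0) {0} = 1" and B: "B \<in> sets unit_space"
  shows "emeasure (\<psi> 0) B = indicator B 0"
proof -
  have p: "prob_space (\<psi> 0)" by (rule psi_prob) simp
  have z: "{0} \<in> sets (\<psi> 0)" unfolding s0 by (rule zero_S)
  have b: "B \<in> sets (\<psi> 0)" unfolding s0 by (rule B)
  show ?thesis by (rule dirac_like[OF p z q b])
qed

lemma inv_delta:
  assumes q: "emeasure (\<psi> 0) {0} = 1"
  shows "invariant_measure \<psi> (return unit_space 0)"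
  unfolding invariant_measure_def
proof (intro conjI ballI)
  show "prob_space (return unit_space 0)" by (rule prob_space_return) (simp add: space_S)
  show "sets (return unit_space 0) = sets unit_space" by (rule sets_return)
  fix B assume B: "B \<in> sets unit_space"
  have "(\<integral>\<^sup>+ v. emeasure (\<psi> v) B \<partial>return unit_space 0) = emeasure (\<psi> 0) B"
    by (rule nn_integral_return) (simp add: space_S, rule measurable_compose[OF psi_sub measurable_emeasure_subprob_algebra[OF B]])
  then show "emeasure (return unit_space 0) B = (\<integral>\<^sup>+ v. emeasure (\<psi> v) B \<partial>return unit_space 0)"
    using psi0_dirac[OF q B] emeasure_return[OF B] by simp
qed

lemma erg_contra:
  assumes erg: "ergodic_measure \<psi> \<pi>" and q: "emeasure (\<psi> 0) {0} = 1"
    and t: "emeasure \<pi> {0} = ennreal t" and t0: "0 < t" and t1: "t < 1"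
  shows "\<pi> = return unit_space 0"
proof -
  define c where "c = 1 / (1 - t)"
  define D where "D = {0<..1::real}"
  define f where "f x = ennreal c * indicator D x" for x
  define \<mu> where "\<mu> = density \<pi> f"
  have DS: "D \<in> sets unit_space" unfolding D_def by (rule D_S)
  have fm: "f \<in> borel_measurable \<pi>" unfolding f_def
    by (intro borel_measurable_times_ennreal borel_measurable_const ind_meas DS)
  have s\<mu>: "sets \<mu> = sets \<pi>" unfolding \<mu>_def by (rule sets_density)
  have sp\<mu>: "space \<mu> = {0..1}" unfolding \<mu>_def space_density by (rule space_pi)
  have e\<mu>: "emeasure \<mu> B = ennreal c * emeasure \<pi> (B \<inter> D)" if B: "B \<in> sets unit_space" for B
  proof -
    have "emeasure \<mu> B = (\<integral>\<^sup>+x. f x * indicator B x \<partial>\<pi>)"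
      unfolding \<mu>_def by (rule emeasure_density[OF fm setpi[OF B]])
    also have "\<dots> = (\<integral>\<^sup>+x. ennreal c * indicator (B \<inter> D) x \<partial>\<pi>)"
      by (rule nn_integral_cong) (auto simp: f_def split: split_indicator)
    also have "\<dots> = ennreal c * emeasure \<pi> (B \<inter> D)"
      by (rule nn_integral_cmult_indicator) (rule setpi, rule sets.Int[OF B DS])
    finally show ?thesis .
  qed
  have ct: "ennreal (1 - t) * ennreal c = 1"
  proof -
    have "ennreal (1 - t) * ennreal c = ennreal ((1 - t) * c)"
      by (rule ennreal_mult[symmetric]) (use t0 t1 in \<open>auto simp: c_def\<close>)
    also have "(1 - t) * c = 1" using t1 by (simp add: c_def)
    finally show ?thesis by simp
  qed
  have split: "emeasure \<pi> B = emeasure \<pi> (B \<inter> D) + indicator B 0 * ennreal t"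
    if B: "B \<in> sets unit_space" for B
    using piB_split[OF B] t unfolding D_def by simp
  have US: "{0..1} \<in> sets unit_space" using sets.top[of unit_space] unfolding space_S .
  have piD: "emeasure \<pi> D = ennreal (1 - t)"
  proof -
    have "emeasure \<pi> {0..1} = 1" using prob_space.emeasure_space_1[OF prob_pi] unfolding space_pi .
    moreover have "{0..1} \<inter> D = D" unfolding D_def by auto
    ultimately have "1 = emeasure \<pi> D + ennreal t" using split[OF US] by simp
    moreover have "1 = ennreal (1 - t) + ennreal t" using t0 t1 by (simp flip: ennreal_plus)
    ultimately have "ennreal t + emeasure \<pi> D = ennreal t + ennreal (1 - t)" by (simp add: add.commute)
    then show ?thesis unfolding ennreal_add_left_cancel by simp
  qed
  have inv2: "invariant_measure \<psi> \<mu>"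
    unfolding invariant_measure_def
  proof (intro conjI ballI)
    show "prob_space \<mu>"
    proof (rule prob_spaceI)
      have "emeasure \<mu> {0..1} = ennreal c * emeasure \<pi> ({0..1} \<inter> D)" by (rule e\<mu>[OF US])
      also have "{0..1} \<inter> D = D" unfolding D_def by auto
      finally show "emeasure \<mu> (space \<mu>) = 1" unfolding sp\<mu> piD using ct by (simp add: mult.commute)
    qed
    show "sets \<mu> = sets unit_space" using s\<mu> sets_pi by simp
    fix B assume B: "B \<in> sets unit_space"
    have pm: "(\<lambda>y. emeasure (\<psi> y) B) \<in> borel_measurable \<pi>" by (rule psiB_meas[OF B])
    have im: "indicator D \<in> borel_measurable \<pi>" by (rule ind_meas[OF DS])
    have i0: "indicator {0} \<in> borel_measurable \<pi>" by (rule ind_meas[OF zero_S])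
    have m1: "(\<lambda>y. indicator D y * emeasure (\<psi> y) B) \<in> borel_measurable \<pi>"
      by (rule borel_measurable_times_ennreal[OF im pm])
    have m2: "(\<lambda>y. indicator {0} y * emeasure (\<psi> y) B) \<in> borel_measurable \<pi>"
      by (rule borel_measurable_times_ennreal[OF i0 pm])
    have "emeasure \<pi> B = (\<integral>\<^sup>+y. emeasure (\<psi> y) B \<partial>\<pi>)"
      using I B unfolding invariant_measure_def by blast
    also have "\<dots> = (\<integral>\<^sup>+y. indicator D y * emeasure (\<psi> y) B + indicator {0} y * emeasure (\<psi> y) B \<partial>\<pi>)"
    proof (rule nn_integral_cong)
      fix y assume "y \<in> space \<pi>"
      then have "y \<in> {0..1}" unfolding space_pi .
      then show "emeasure (\<psi> y) B = indicator D y * emeasure (\<psi> y) B + indicator {0} y * emeasure (\<psi> y) B"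
        unfolding D_def by (cases "y = 0") (auto simp: indicator_def)
    qed
    also have "\<dots> = (\<integral>\<^sup>+y. indicator D y * emeasure (\<psi> y) B \<partial>\<pi>) + (\<integral>\<^sup>+y. indicator {0} y * emeasure (\<psi> y) B \<partial>\<pi>)"
      by (rule nn_integral_add[OF m1 m2])
    also have "(\<integral>\<^sup>+y. indicator {0} y * emeasure (\<psi> y) B \<partial>\<pi>) = (\<integral>\<^sup>+y. emeasure (\<psi> 0) B * indicator {0} y \<partial>\<pi>)"
      by (rule nn_integral_cong) (simp add: indicator_def)
    also have "\<dots> = emeasure (\<psi> 0) B * emeasure \<pi> {0}"
      by (rule nn_integral_cmult_indicator) (rule setpi[OF zero_S])
    also have "\<dots> = indicator B 0 * ennreal t" using psi0_dirac[OF q B] t by simp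
    finally have "emeasure \<pi> B = (\<integral>\<^sup>+y. indicator D y * emeasure (\<psi> y) B \<partial>\<pi>) + indicator B 0 * ennreal t" .
    then have "indicator B 0 * ennreal t + emeasure \<pi> (B \<inter> D) = indicator B 0 * ennreal t + (\<integral>\<^sup>+y. indicator D y * emeasure (\<psi> y) B \<partial>\<pi>)"
      using split[OF B] by (simp add: add.commute)
    moreover have fin: "indicator B 0 * ennreal t \<noteq> \<top>" by (simp add: indicator_def)
    ultimately have "emeasure \<pi> (B \<inter> D) = (\<integral>\<^sup>+y. indicator D y * emeasure (\<psi> y) B \<partial>\<pi>)"
      unfolding ennreal_add_left_cancel infinity_ennreal_def by blast
    then have key: "(\<integral>\<^sup>+y. indicator D y * emeasure (\<psi> y) B \<partial>\<pi>) = emeasure \<pi> (B \<inter> D)"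
      by (rule sym)
    have "(\<integral>\<^sup>+y. emeasure (\<psi> y) B \<partial>\<mu>) = (\<integral>\<^sup>+y. f y * emeasure (\<psi> y) B \<partial>\<pi>)"
      unfolding \<mu>_def by (rule nn_integral_density[OF fm pm])
    also have "\<dots> = (\<integral>\<^sup>+y. ennreal c * (indicator D y * emeasure (\<psi> y) B) \<partial>\<pi>)"
      by (rule nn_integral_cong) (simp add: f_def mult.assoc)
    also have "\<dots> = ennreal c * (\<integral>\<^sup>+y. indicator D y * emeasure (\<psi> y) B \<partial>\<pi>)"
      by (rule nn_integral_cmult[OF m1])
    also have "\<dots> = emeasure \<mu> B" unfolding key e\<mu>[OF B] ..
    finally show "emeasure \<mu> B = (\<integral>\<^sup>+y. emeasure (\<psi> y) B \<partial>\<mu>)" ..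
  qed
  have dec: "\<forall>B\<in>sets unit_space. emeasure \<pi> B = ennreal t * emeasure (return unit_space 0) B + ennreal (1 - t) * emeasure \<mu> B"
  proof
    fix B assume B: "B \<in> sets unit_space"
    have "ennreal (1 - t) * emeasure \<mu> B = (ennreal (1 - t) * ennreal c) * emeasure \<pi> (B \<inter> D)"
      unfolding e\<mu>[OF B] by (simp add: mult.assoc)
    also have "\<dots> = emeasure \<pi> (B \<inter> D)" unfolding ct by simp
    finally show "emeasure \<pi> B = ennreal t * emeasure (return unit_space 0) B + ennreal (1 - t) * emeasure \<mu> B"
      unfolding emeasure_return[OF B] split[OF B] by (simp add: add.commute mult.commute)
  qed
  have "return unit_space 0 = \<pi> \<and> \<mu> = \<pi>"
    using erg inv_delta[OF q] inv2 t0 t1 dec unfolding ergodic_measure_def by blast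
  then show ?thesis by simp
qed

lemma part3b:
  assumes erg: "ergodic_measure \<psi> \<pi>" and ne: "\<pi> \<noteq> return unit_space 0"
  shows "AE x in M. (\<lambda>j. sb_weight v j x) sums 1"
proof (cases "emeasure \<pi> {0} = 0")
  case True then show ?thesis by (rule part2)
next
  case False
  interpret Q: prob_space \<pi> by (rule prob_pi)
  define t where "t = measure \<pi> {0}"
  have et: "emeasure \<pi> {0} = ennreal t" unfolding t_def by (rule Q.emeasure_eq_measure)
  have "t \<noteq> 0" using False et by auto
  then have t0: "0 < t" using measure_nonneg[of \<pi> "{0}"] unfolding t_def by linarith
  have z\<pi>: "{0} \<in> sets \<pi>" by (rule setpi[OF zero_S])
  have t1: "t < 1"
  proof (rule ccontr)
    assume "\<not> t < 1"
    moreover have "t \<le> 1" unfolding t_def by (rule prob_space.prob_le_1[OF prob_pi])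
    ultimately have "t = 1" by simp
    then have e1: "emeasure \<pi> {0} = 1" using et by simp
    have "\<pi> = return unit_space 0"
    proof (rule measure_eqI)
      show "sets \<pi> = sets (return unit_space 0)" using sets_pi by simp
      fix B assume "B \<in> sets \<pi>"
      then have B: "B \<in> sets unit_space" using sets_pi by simp
      show "emeasure \<pi> B = emeasure (return unit_space 0) B"
        unfolding emeasure_return[OF B] by (rule dirac_like[OF prob_pi z\<pi> e1 setpi[OF B]])
    qed
    then show False using ne by simp
  qed
  define q where "q = emeasure (\<psi> 0) {0}"
  have q1: "q \<noteq> 1"
  proof
    assume "q = 1"
    then have "\<pi> = return unit_space 0" using erg_contra[OF erg _ et t0 t1] unfolding q_def by simp
    then show False using ne by simp
  qed
  have qle: "q \<le> 1" unfolding q_def by (rule prob_space.emeasure_le_1[OF psi_prob]) simp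
  define r where "r = enn2real q"
  have qr: "q = ennreal r" unfolding r_def using qle by (simp add: ennreal_enn2real_if) (metis ennreal_one_neq_top top.extremum_unique)
  have r0: "0 \<le> r" unfolding r_def by simp
  have r1: "r < 1" using qle q1 qr by (metis ennreal_le_iff order_le_less ennreal_1 zero_le_one)
  define Z where "Z = {x \<in> space M. \<forall>k. v k x \<in> {0}}"
  have Zm: "Z \<in> sets M" unfolding Z_def
    by (rule sets.sets_Collect_countable_All) (rule vm[OF zero_S])
  have Zle: "measure M Z \<le> r ^ n" for n
  proof -
    define Zn where "Zn = {x \<in> space M. \<forall>i\<le>n. v (0+i) x \<in> (\<lambda>_. {0}) i}"
    have Znm: "Zn \<in> sets M" unfolding Zn_def by (rule ev_meas) (rule zero_S)
    have "Z \<subseteq> Zn" unfolding Z_def Zn_def by auto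
    then have "emeasure M Z \<le> emeasure M Zn" by (rule emeasure_mono[OF _ Znm])
    also have "emeasure M Zn = emeasure M {x \<in> space M. \<forall>i\<le>n. v i x \<in> (\<lambda>_. {0}) i}"
      unfolding Zn_def by (rule S1) (rule zero_S)
    also have "\<dots> = (\<integral>\<^sup>+x. mc_fdd \<psi> (\<lambda>_. {0}) 0 n x \<partial>\<pi>)" by (rule MCe) (rule zero_S)
    also have "\<dots> = (\<integral>\<^sup>+x. q ^ n * indicator {0} x \<partial>\<pi>)"
      by (rule nn_integral_cong) (simp add: mc_zero q_def mult.commute)
    also have "\<dots> = q ^ n * emeasure \<pi> {0}" by (rule nn_integral_cmult_indicator[OF z\<pi>])
    also have "\<dots> \<le> q ^ n * 1" by (rule mult_left_mono) (rule prob_space.emeasure_le_1[OF prob_pi], simp)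
    also have "\<dots> = ennreal (r ^ n)" unfolding qr using ennreal_power[OF r0] by simp
    finally have "ennreal (measure M Z) \<le> ennreal (r ^ n)" unfolding P.emeasure_eq_measure .
    then show ?thesis using r0 by simp
  qed
  have "measure M Z = 0"
  proof (rule ccontr)
    assume "measure M Z \<noteq> 0"
    then have pos: "0 < measure M Z" using measure_nonneg[of M Z] by linarith
    have "(\<lambda>n. r ^ n) \<longlonglongrightarrow> 0" by (rule LIMSEQ_power_zero) (use r0 r1 in auto)
    from order_tendstoD(2)[OF this pos] obtain n where "r ^ n < measure M Z"
      by (auto simp: eventually_sequentially)
    then show False using Zle[of n] by simp
  qed
  then have "Z \<in> null_sets M" using Zm P.emeasure_eq_measure[of Z] by (intro null_setsI) simp_all
  then have "AE x in M. \<not> (\<forall>k. v k x \<in> {0})" by (rule AE_I') (auto simp: Z_def)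
  then show ?thesis using G AE_space
  proof eventually_elim
    case (elim x)
    then obtain k where "v k x \<noteq> 0" by auto
    then have "v k x > 0" using v_range[OF elim(3), of k] by simp
    then show ?case using elim by blast
  qed
qed

end

theorem mainTheorem1:
  fixes M :: "'a measure" and v :: "nat \<Rightarrow> 'a \<Rightarrow> real"
    and \<pi> :: "real measure" and \<psi> :: "real \<Rightarrow> real measure"
  assumes "prob_space M"
    and "transition_kernel \<psi>"
    and "invariant_measure \<psi> \<pi>"
    and "markov_chain M v \<pi> \<psi>"
  shows "(emeasure M {x \<in> space M. \<exists>j. v j x = 1} = 1 \<longrightarrow>
            (AE x in M. (\<lambda>j. sb_weight v j x) sums 1))
       \<and> (emeasure \<pi> {0} = 0 \<longrightarrow> (AE x in M. (\<lambda>j. sb_weight v j x) sums 1))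
       \<and> (ergodic_measure \<psi> \<pi> \<longrightarrow>
            (\<pi> \<noteq> return unit_space 0 \<longleftrightarrow> (AE x in M. (\<lambda>j. sb_weight v j x) sums 1)))"
proof -
  interpret smc M v \<pi> \<psi> by (rule smc.intro) (rule assms)+
  show ?thesis using part1 part2 part3a part3b by blast
qed

end
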